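(* Let $\mathcal P_m$ be the $1$-dimensional PVAS with states $\{\perp,0,1,\dots,m\}$, stack alphabet $\{\gamma_0,\dots,\gamma_m\}$ and transitions $(\perp,0,\mathrm{pop}(\gamma_0),0)$, $(0,+1,\mathrm{nop},\perp)$, and for each $i\in\{1,\dots,m\}$: $(\perp,0,\mathrm{pop}(\gamma_i),i)$, $(i,+1,\mathrm{push}(\gamma_{i-1}),\perp)$, $(i,-1,\mathrm{push}(\gamma_{i-1}),i)$. Define for $c\in\mathbb N$ and $w=\gamma_{i_1}\cdots\gamma_{i_k}$ the number $\theta(c,w)=A_{i_1}\circ\cdots\circ A_{i_k}(c)$ (so $\theta(c,\varepsilon)=c$). Then for all $c,c'\in\mathbb N$ and $w,w'\in\{\gamma_0,\dots,\gamma_m\}^*$, if $(\perp,c,w)\xrightarrow{*}(\perp,c',w')$ then $\theta(c,w)\ge\theta(c',w')\ge c'+|w'|$. Consequently, from any configuration of $\mathcal P_m$ only finitely many configurations are reachable.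
   Context: Ackermann functions $A_j:\mathbb N\to\mathbb N$: $A_0(n)=n+1$, $A_j(n)=A_{j-1}^{n+1}(1)$ for $j>0$. For a $1$-dimensional PVAS with transitions in $Q\times\mathbb Z\times\mathrm{Op}(\Gamma)\times Q$, configurations are $(q,c,w)\in Q\times\mathbb N\times\Gamma^*$, and $(p,c,u)\to(q,d,v)$ iff some transition $(p,a,\mathrm{op},q)$ has $d=c+a\ge0$ and either $\mathrm{op}=\mathrm{push}(\gamma)$, $v=u\gamma$; or $\mathrm{op}=\mathrm{pop}(\gamma)$, $u=v\gamma$; or $\mathrm{op}=\mathrm{nop}$, $u=v$. $\xrightarrow{*}$ is the reflexive transitive closure; $|w'|$ is the length of $w'$. *)

theory Defs
  imports Main
begin

fun Ack :: "nat \<Rightarrow> nat \<Rightarrow> nat" where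
  "Ack 0 n = Suc n"
| "Ack (Suc j) n = ((Ack j) ^^ (Suc n)) 1"

datatype 'g stack_op = Push 'g | Pop 'g | Nop

text \<open>One step of a 1-dimensional PVAS with transition set T.
  Configurations are (state, counter, stack); the stack top is the last letter
  (push(gamma) turns u into u @ [gamma]).\<close>
definition pvas_step ::
  "('q \<times> int \<times> 'g stack_op \<times> 'q) set \<Rightarrow> ('q \<times> nat \<times> 'g list) \<Rightarrow> ('q \<times> nat \<times> 'g list) \<Rightarrow> bool" where
  "pvas_step T cfg cfg' \<longleftrightarrow>
     (case cfg of (p, c, u) \<Rightarrow> case cfg' of (q, d, v) \<Rightarrow>
       (\<exists>a op. (p, a, op, q) \<in> T \<and> int d = int c + a \<and>
          (case op of Push \<gamma> \<Rightarrow> v = u @ [\<gamma>]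
                    | Pop \<gamma> \<Rightarrow> u = v @ [\<gamma>]
                    | Nop \<Rightarrow> u = v)))"

abbreviation pvas_reach ::
  "('q \<times> int \<times> 'g stack_op \<times> 'q) set \<Rightarrow> ('q \<times> nat \<times> 'g list) \<Rightarrow> ('q \<times> nat \<times> 'g list) \<Rightarrow> bool" where
  "pvas_reach T \<equiv> (pvas_step T)\<^sup>*\<^sup>*"

text \<open>States of P_m: Bot (\<bottom>) and St i for i \<in> {0..m}; stack letter gamma_i is the natural number i.\<close>
datatype pstate = Bot | St nat

definition Pm_states :: "nat \<Rightarrow> pstate set" where
  "Pm_states m = insert Bot (St ` {0..m})"

definition Pm :: "nat \<Rightarrow> (pstate \<times> int \<times> nat stack_op \<times> pstate) set" where
  "Pm m = {(Bot, 0, Pop 0, St 0), (St 0, 1, Nop, Bot)}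
     \<union> (\<Union>i\<in>{1..m}. {(Bot, 0, Pop i, St i),
                     (St i, 1, Push (i - 1), Bot),
                     (St i, -1, Push (i - 1), St i)})"

fun theta :: "nat \<Rightarrow> nat list \<Rightarrow> nat" where
  "theta c [] = c"
| "theta c (i # w) = Ack i (theta c w)"

end

theory Submission
  imports Defs
begin

lemma Ack_Suc0: "Ack (Suc j) 0 = Ack j 1" by simp
lemma Ack_SucSuc: "Ack (Suc j) (Suc n) = Ack j (Ack (Suc j) n)" by simp

declare Ack.simps(2)[simp del]

lemma Ack_gt: "n < Ack j n"
proof (induction j arbitrary: n)
  case 0 then show ?case by simp
next
  case (Suc j)
  note IHo = Suc.IH
  show ?case
  proof (induction n)
    case 0 then show ?case using IHo[of 1] by (simp add: Ack_Suc0)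
  next
    case (Suc n) then show ?case using IHo[of "Ack (Suc j) n"]
      by (simp add: Ack_SucSuc)
  qed
qed

lemma Ack_mono_Suc: "Ack j n < Ack j (Suc n)"
proof (cases j)
  case 0 then show ?thesis by simp
next
  case (Suc k) then show ?thesis using Ack_gt[of "Ack (Suc k) n" k] by (simp add: Ack_SucSuc)
qed

lemma Ack_mono: "n \<le> n' \<Longrightarrow> Ack j n \<le> Ack j n'"
  by (induction n' rule: dec_induct) (auto intro: order_trans less_imp_le Ack_mono_Suc)

lemma Ack_diag: "Ack j (Suc n) \<le> Ack (Suc j) n"
proof (induction n)
  case 0 then show ?case by (simp add: Ack_Suc0)
next
  case (Suc n)
  have "Suc (Suc n) \<le> Ack (Suc j) n" using Suc Ack_gt[of "Suc n" j] by linarith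
  then show ?case by (simp add: Ack_SucSuc Ack_mono)
qed

lemma theta_append: "theta c (u @ v) = theta (theta c v) u"
  by (induction u) auto

lemma theta_mono: "c \<le> c' \<Longrightarrow> theta c w \<le> theta c' w"
  by (induction w) (auto intro: Ack_mono)

lemma theta_ge: "c + length w \<le> theta c w"
proof (induction w)
  case Nil then show ?case by simp
next
  case (Cons i w) then show ?case using Ack_gt[of "theta c w" i] by simp
qed

fun phi :: "pstate \<times> nat \<times> nat list \<Rightarrow> nat" where
  "phi (Bot, d, w) = theta d w"
| "phi (St i, d, w) = theta (Ack i d) w"

lemma phi_ge: "snd (fst (snd x), snd (snd x)) = snd (snd x) \<Longrightarrow> fst (snd x) + length (snd (snd x)) \<le> phi x"
proof -
  obtain q d w where x: "x = (q, d, w)" by (cases x) auto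
  show ?thesis
  proof (cases q)
    case Bot then show ?thesis using x theta_ge[of d w] by simp
  next
    case (St i)
    have "d + length w \<le> Ack i d + length w" using Ack_gt[of d i] by simp
    also have "\<dots> \<le> theta (Ack i d) w" by (rule theta_ge)
    finally show ?thesis using x St by simp
  qed
qed

lemma step_phi:
  assumes "pvas_step (Pm m) x y"
  shows "phi y \<le> phi x \<and> fst y \<in> Pm_states m \<and> set (snd (snd y)) \<subseteq> set (snd (snd x)) \<union> {0..m}"
proof -
  obtain p c u where x: "x = (p, c, u)" by (cases x) auto
  obtain q d v where y: "y = (q, d, v)" by (cases y) auto
  from assms obtain a op where t: "(p, a, op, q) \<in> Pm m" and cnt: "int d = int c + a"
    and st: "(case op of Push \<gamma> \<Rightarrow> v = u @ [\<gamma>] | Pop \<gamma> \<Rightarrow> u = v @ [\<gamma>] | Nop \<Rightarrow> u = v)"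
    unfolding pvas_step_def x y by auto
  from t consider
      "p = Bot" "a = 0" "op = Pop 0" "q = St 0"
    | "p = St 0" "a = 1" "op = Nop" "q = Bot"
    | i where "i \<in> {1..m}" "p = Bot" "a = 0" "op = Pop i" "q = St i"
    | i where "i \<in> {1..m}" "p = St i" "a = 1" "op = Push (i-1)" "q = Bot"
    | i where "i \<in> {1..m}" "p = St i" "a = -1" "op = Push (i-1)" "q = St i"
    unfolding Pm_def by auto
  then show ?thesis
  proof cases
    case 1 then show ?thesis using x y cnt st by (auto simp: theta_append Pm_states_def)
  next
    case 2
    then have "d = Suc c" using cnt by simp
    then have "phi y = phi x" using 2 x y st by simp
    then show ?thesis using 2 x y st by (auto simp: Pm_states_def)
  next
    case (3 i) then show ?thesis using x y cnt st by (auto simp: theta_append Pm_states_def)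
  next
    case (4 i)
    then obtain k where k: "i = Suc k" by (cases i) auto
    have "d = Suc c" using cnt 4 by simp
    then have "phi y = theta (Ack k (Suc c)) u" using y 4 st k by (simp add: theta_append)
    also have "\<dots> \<le> theta (Ack i c) u" using k Ack_diag theta_mono by blast
    finally show ?thesis using x y 4 st by (auto simp: Pm_states_def)
  next
    case (5 i)
    then obtain k where k: "i = Suc k" by (cases i) auto
    have "c = Suc d" using cnt 5 by simp
    then have "phi y = phi x" using x y 5 st k by (simp add: theta_append Ack_SucSuc)
    then show ?thesis using x y 5 st by (auto simp: Pm_states_def)
  qed
qed

lemma reach_phi:
  assumes "pvas_reach (Pm m) x y"
  shows "phi y \<le> phi x \<and> fst y \<in> insert (fst x) (Pm_states m) \<and> set (snd (snd y)) \<subseteq> set (snd (snd x)) \<union> {0..m}"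
  using assms
proof (induction rule: rtranclp_induct)
  case base then show ?case by simp
next
  case (step y z)
  then show ?case using step_phi[OF step(2)] by auto
qed

theorem mainTheorem5:
  fixes m :: nat
  shows "(\<forall>c c' w w'. set w \<subseteq> {0..m} \<longrightarrow> set w' \<subseteq> {0..m} \<longrightarrow>
            pvas_reach (Pm m) (Bot, c, w) (Bot, c', w') \<longrightarrow>
            theta c w \<ge> theta c' w' \<and> theta c' w' \<ge> c' + length w')
       \<and> (\<forall>q c w. q \<in> Pm_states m \<longrightarrow> set w \<subseteq> {0..m} \<longrightarrow>
            finite {cfg. pvas_reach (Pm m) (q, c, w) cfg})"
proof (intro conjI allI impI)
  fix c c' w w'
  assume "pvas_reach (Pm m) (Bot, c, w) (Bot, c', w')"
  from reach_phi[OF this] show "theta c' w' \<le> theta c w" by simp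
  show "c' + length w' \<le> theta c' w'" by (rule theta_ge)
next
  fix q c w
  assume q: "q \<in> Pm_states m" and w: "set w \<subseteq> {0..m}"
  define B where "B = phi (q, c, w)"
  have fs: "finite (Pm_states m)" unfolding Pm_states_def by simp
  have "{cfg. pvas_reach (Pm m) (q, c, w) cfg} \<subseteq>
        Pm_states m \<times> {..B} \<times> {xs. set xs \<subseteq> {0..m} \<and> length xs \<le> B}"
  proof
    fix cfg assume "cfg \<in> {cfg. pvas_reach (Pm m) (q, c, w) cfg}"
    then have r: "pvas_reach (Pm m) (q, c, w) cfg" by simp
    obtain q' d v where cfg: "cfg = (q', d, v)" by (cases cfg) auto
    from reach_phi[OF r] have "phi cfg \<le> B" "q' \<in> Pm_states m" "set v \<subseteq> {0..m}"
      using q w cfg B_def by auto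
    moreover have "d + length v \<le> phi cfg" using phi_ge[of cfg] cfg by simp
    ultimately show "cfg \<in> Pm_states m \<times> {..B} \<times> {xs. set xs \<subseteq> {0..m} \<and> length xs \<le> B}"
      using cfg by auto
  qed
  moreover have "finite (Pm_states m \<times> {..B} \<times> {xs. set xs \<subseteq> {0..m} \<and> length xs \<le> B})"
    using fs finite_lists_length_le[of "{0..m}" B] by auto
  ultimately show "finite {cfg. pvas_reach (Pm m) (q, c, w) cfg}" by (rule finite_subset)
qed

end
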